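(* Let $F$ be an algebraically closed field. (i) If $\mathrm{char}\,F\ne2$, then the $1$-dimensional maximal Mathieu subspaces of $M_2(F)$ are exactly the subspaces $F(I_2+c)$ with $c\in M_2(F)$ nonzero and nilpotent. (ii) If $\mathrm{char}\,F=2$, then $M_2(F)$ has no $1$-dimensional maximal Mathieu subspace.
   Context: Let $\mathcal A$ be an associative algebra over a field $F$. An $F$-subspace $M\subseteq\mathcal A$ is a Mathieu subspace (MS) of $\mathcal A$ if for all $a,b,c\in\mathcal A$ such that $a^m\in M$ for all $m\ge 1$, there exists $N$ (depending on $a,b,c$) such that $ba^mc\in M$ for all $m\ge N$. A maximal MS of $\mathcal A$ is a proper MS of $\mathcal A$ that is not properly contained in any proper MS of $\mathcal A$. *)

theory Defs
  imports "HOL-Analysis.Analysis" "HOL-Computational_Algebra.Polynomial"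
begin

text \<open>Matrices over F are 'a^'n^'n (HOL-Analysis); the matrix product is (**),
  the identity is mat 1. Scalar multiplication of a matrix by an element of F:\<close>
definition smat :: "'a::times \<Rightarrow> 'a^'n^'m \<Rightarrow> 'a^'n^'m" where
  "smat t A = (\<chi> i j. t * (A $ i $ j))"

definition matpow :: "'a::semiring_1^'n^'n \<Rightarrow> nat \<Rightarrow> 'a^'n^'n" where
  "matpow A m = (((**) A) ^^ m) (mat 1)"

definition mat_nilpotent :: "'a::semiring_1^'n^'n \<Rightarrow> bool" where
  "mat_nilpotent A \<longleftrightarrow> (\<exists>k. matpow A k = 0)"

definition mat_subspace :: "('a::field^'n^'n) set \<Rightarrow> bool" where
  "mat_subspace M \<longleftrightarrow> 0 \<in> M \<and> (\<forall>A\<in>M. \<forall>B\<in>M. A + B \<in> M) \<and> (\<forall>t. \<forall>A\<in>M. smat t A \<in> M)"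

definition mathieu_subspace :: "('a::field^'n^'n) set \<Rightarrow> bool" where
  "mathieu_subspace M \<longleftrightarrow> mat_subspace M \<and>
     (\<forall>a b c. (\<forall>m\<ge>1. matpow a m \<in> M) \<longrightarrow> (\<exists>N. \<forall>m\<ge>N. b ** matpow a m ** c \<in> M))"

definition maximal_mathieu_subspace :: "('a::field^'n^'n) set \<Rightarrow> bool" where
  "maximal_mathieu_subspace M \<longleftrightarrow> mathieu_subspace M \<and> M \<noteq> UNIV \<and>
     (\<forall>M'. mathieu_subspace M' \<and> M' \<noteq> UNIV \<and> M \<subseteq> M' \<longrightarrow> M' = M)"

definition one_dim_subspace :: "('a::field^'n^'n) set \<Rightarrow> bool" where
  "one_dim_subspace M \<longleftrightarrow> (\<exists>B. B \<noteq> 0 \<and> M = range (\<lambda>t. smat t B))"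

end

theory Submission imports Defs begin

definition M2 :: "'a \<Rightarrow> 'a \<Rightarrow> 'a \<Rightarrow> 'a \<Rightarrow> 'a^2^2" where
  "M2 a b c d = (\<chi> i j. if i = 1 then (if j = 1 then a else b) else (if j = 1 then c else d))"

lemma two_ne: "(2::2) \<noteq> 1" by simp

lemma M2_nth: "M2 a b c d $ 1 $ 1 = a" "M2 a b c d $ 1 $ 2 = b" "M2 a b c d $ 2 $ 1 = c" "M2 a b c d $ 2 $ 2 = d"
  by (simp_all add: M2_def)

lemma M2_eta: "X = M2 (X$1$1) (X$1$2) (X$2$1) (X$2$2)"
  unfolding M2_def vec_eq_iff forall_2 by simp

lemma M2_cases: obtains a b c d where "X = M2 a b c d"
  using M2_eta by blast

lemma M2_eq[simp]: "M2 a b c d = M2 a' b' c' d' \<longleftrightarrow> a = a' \<and> b = b' \<and> c = c' \<and> d = d'"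
  unfolding M2_def vec_eq_iff forall_2 by simp

lemma M2_mult[simp]: "M2 a b c d ** M2 a' b' c' d' = M2 (a*a'+b*c') (a*b'+b*d') (c*a'+d*c') (c*b'+d*d')"
  unfolding M2_def vec_eq_iff forall_2 matrix_matrix_mult_def sum_2 by simp

lemma M2_add[simp]: "M2 a b c d + M2 a' b' c' d' = M2 (a+a') (b+b') (c+c') (d+d')"
  unfolding M2_def vec_eq_iff forall_2 by simp

lemma M2_diff[simp]: "M2 a b c d - M2 a' b' c' d' = (M2 (a-a') (b-b') (c-c') (d-d') :: 'a::ab_group_add^2^2)"
  unfolding M2_def vec_eq_iff forall_2 by simp

lemma M2_smat[simp]: "smat t (M2 a b c d) = M2 (t*a) (t*b) (t*c) (t*d)"
  unfolding M2_def smat_def vec_eq_iff forall_2 by simp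

lemma M2_zero: "(0::'a::zero^2^2) = M2 0 0 0 0"
  unfolding M2_def vec_eq_iff forall_2 by simp

lemma M2_one: "(mat 1::'a::{zero,one}^2^2) = M2 1 0 0 1"
  unfolding M2_def mat_def vec_eq_iff forall_2 by simp

definition tr2 :: "'a::field^2^2 \<Rightarrow> 'a" where "tr2 X = X$1$1 + X$2$2"
definition dt2 :: "'a::field^2^2 \<Rightarrow> 'a" where "dt2 X = X$1$1 * X$2$2 - X$1$2 * X$2$1"

lemma tr2_M2[simp]: "tr2 (M2 a b c d) = a + d" by (simp add: tr2_def M2_nth)
lemma dt2_M2[simp]: "dt2 (M2 a b c d) = a * d - b * c" by (simp add: dt2_def M2_nth)

lemma idem_scalar: "(a::'a::field)*a = a \<Longrightarrow> a = 0 \<or> a = 1"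
  by (metis mult_left_cancel mult_1_right)

lemma idem_char:
  fixes X :: "'a::field^2^2"
  assumes "X ** X = X" "X \<noteq> 0"
  shows "X = mat 1 \<or> (tr2 X = 1 \<and> dt2 X = 0)"
proof -
  obtain a b c d where X: "X = M2 a b c d" by (rule M2_cases)
  have e: "a*a+b*c = a" "a*b+b*d = b" "c*a+d*c = c" "c*b+d*d = d"
    using assms(1) unfolding X by simp_all
  have nz: "\<not> (a = 0 \<and> b = 0 \<and> c = 0 \<and> d = 0)" using assms(2) unfolding X M2_zero by simp
  have e1: "(a + d - 1) * b = 0" "(a + d - 1) * c = 0" using e by (simp_all add: algebra_simps)
  show ?thesis
  proof (cases "a + d = 1")
    case True
    then have "d = 1 - a" by (metis add_diff_cancel_left')
    then have "a * d - b * c = 0" using e(1) by algebra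
    then show ?thesis using True X by simp
  next
    case False
    then have bc: "b = 0" "c = 0" using e1 by auto
    then have "a*a = a" "d*d = d" using e by simp_all
    then have "a = 0 \<or> a = 1" "d = 0 \<or> d = 1"
      by (simp_all add: idem_scalar)
    moreover have "\<not> (a = 0 \<and> d = 0)" using nz bc by simp
    moreover have "\<not> (a + d = 1)" by (fact False)
    ultimately have "a = 1 \<and> d = 1" by auto
    then show ?thesis using bc X by (simp add: M2_one)
  qed
qed

lemma idem_of_char:
  fixes X :: "'a::field^2^2"
  assumes "tr2 X = 1" "dt2 X = 0"
  shows "X ** X = X" "X \<noteq> 0"
proof -
  obtain a b c d where X: "X = M2 a b c d" by (rule M2_cases)
  have h1: "a + d = 1" "a*d - b*c = 0" using assms X by simp_all
  have d: "d = 1 - a" using h1(1) by (metis add_diff_cancel_left')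
  have bc: "b * c = a * (1 - a)" using h1(2) d by simp
  have "a*a+b*c = a" using bc by (simp add: algebra_simps)
  moreover have "a*b+b*d = b" "c*a+d*c = c" unfolding d by (simp_all add: algebra_simps)
  moreover have "c*b+d*d = d" using bc unfolding d by (simp add: mult.commute[of c b] algebra_simps)
  ultimately show "X ** X = X" unfolding X by simp
  show "X \<noteq> 0" using assms unfolding X M2_zero by auto
qed

lemma matpow_0[simp]: "matpow A 0 = mat 1" by (simp add: matpow_def)
lemma matpow_Suc[simp]: "matpow A (Suc m) = A ** matpow A m" by (simp add: matpow_def)

lemma matpow_idem: "e ** e = e \<Longrightarrow> m \<ge> 1 \<Longrightarrow> matpow e m = (e::'a::field^'n^'n)"
proof (induction m)
  case 0 then show ?case by simp
next
  case (Suc m)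
  then show ?case by (cases m) (auto simp: matrix_mul_rid)
qed

lemma L1:
  fixes M :: "('a::field^2^2) set" and e :: "'a^2^2"
  assumes ms: "mathieu_subspace M" and eM: "e \<in> M" and ee: "e ** e = e" and ne: "e \<noteq> 0"
  shows "M = UNIV"
proof -
  have sub: "mat_subspace M" using ms by (simp add: mathieu_subspace_def)
  have all: "b ** e ** c \<in> M" for b c :: "'a^2^2"
  proof -
    have "\<forall>m\<ge>1. matpow e m \<in> M"
    proof -
      show ?thesis using eM matpow_idem[OF ee] by auto
    qed
    then obtain N where "\<forall>m\<ge>N. b ** matpow e m ** c \<in> M" using ms unfolding mathieu_subspace_def by blast
    then have "b ** matpow e (max N 1) ** c \<in> M" by simp
    then show ?thesis using matpow_idem[OF ee, of "max N 1"] by simp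
  qed
  have add: "A + B \<in> M" if "A \<in> M" "B \<in> M" for A B using sub that by (simp add: mat_subspace_def)
  obtain p q r u where E: "e = M2 p q r u" by (rule M2_cases)
  have nz: "p \<noteq> 0 \<or> q \<noteq> 0 \<or> r \<noteq> 0 \<or> u \<noteq> 0" using ne unfolding E M2_zero by auto
  have "X \<in> M" for X
  proof -
    obtain x1 x2 x3 x4 where X: "X = M2 x1 x2 x3 x4" by (rule M2_cases)
    have sp: "X = M2 x1 0 x3 0 + M2 0 x2 0 x4" unfolding X by simp
    have "M2 x1 0 x3 0 \<in> M \<and> M2 0 x2 0 x4 \<in> M"
    proof -
      { assume "p \<noteq> 0"
        then have "M2 (x1/p) 0 (x3/p) 0 ** e ** M2 1 0 0 0 = M2 x1 0 x3 0"
          "M2 (x2/p) 0 (x4/p) 0 ** e ** M2 0 1 0 0 = M2 0 x2 0 x4" unfolding E by simp_all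
        then have ?thesis using all[of "M2 (x1/p) 0 (x3/p) 0" "M2 1 0 0 0"] all[of "M2 (x2/p) 0 (x4/p) 0" "M2 0 1 0 0"] by simp }
      moreover
      { assume "q \<noteq> 0"
        then have "M2 (x1/q) 0 (x3/q) 0 ** e ** M2 0 0 1 0 = M2 x1 0 x3 0"
          "M2 (x2/q) 0 (x4/q) 0 ** e ** M2 0 0 0 1 = M2 0 x2 0 x4" unfolding E by simp_all
        then have ?thesis using all[of "M2 (x1/q) 0 (x3/q) 0" "M2 0 0 1 0"] all[of "M2 (x2/q) 0 (x4/q) 0" "M2 0 0 0 1"] by simp }
      moreover
      { assume "r \<noteq> 0"
        then have "M2 0 (x1/r) 0 (x3/r) ** e ** M2 1 0 0 0 = M2 x1 0 x3 0"
          "M2 0 (x2/r) 0 (x4/r) ** e ** M2 0 1 0 0 = M2 0 x2 0 x4" unfolding E by simp_all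
        then have ?thesis using all[of "M2 0 (x1/r) 0 (x3/r)" "M2 1 0 0 0"] all[of "M2 0 (x2/r) 0 (x4/r)" "M2 0 1 0 0"] by simp }
      moreover
      { assume "u \<noteq> 0"
        then have "M2 0 (x1/u) 0 (x3/u) ** e ** M2 0 0 1 0 = M2 x1 0 x3 0"
          "M2 0 (x2/u) 0 (x4/u) ** e ** M2 0 0 0 1 = M2 0 x2 0 x4" unfolding E by simp_all
        then have ?thesis using all[of "M2 0 (x1/u) 0 (x3/u)" "M2 0 0 1 0"] all[of "M2 0 (x2/u) 0 (x4/u)" "M2 0 0 0 1"] by simp }
      ultimately show ?thesis using nz by blast
    qed
    then have "M2 x1 0 x3 0 + M2 0 x2 0 x4 \<in> M" using add by blast
    moreover have "M2 x1 0 x3 0 + M2 0 x2 0 x4 = X" unfolding X by simp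
    ultimately show ?thesis by simp
  qed
  then show ?thesis by auto
qed

lemma CH: "X ** X = smat (tr2 X) X - smat (dt2 X) (mat 1)"
  for X :: "'a::field^2^2"
proof -
  obtain a b c d where X: "X = M2 a b c d" by (rule M2_cases)
  show ?thesis unfolding X M2_one
    by (simp only: M2_smat M2_diff M2_mult M2_eq tr2_M2 dt2_M2) (intro conjI; algebra)
qed

lemma smat_mult2: "smat s A ** smat t B = smat (s*t) (A ** B)" for A B :: "'a::field^2^2"
proof -
  obtain a b c d where A: "A = M2 a b c d" by (rule M2_cases)
  obtain a' b' c' d' where B: "B = M2 a' b' c' d'" by (rule M2_cases)
  show ?thesis unfolding A B by (simp add: algebra_simps)
qed

lemma smat_smat: "smat s (smat t A) = smat (s*t) A" for A B :: "'a::field^'n^'m" by (simp add: smat_def vec_eq_iff)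
lemma smat_1: "smat 1 A = A" for A B :: "'a::field^'n^'m" by (simp add: smat_def vec_eq_iff)
lemma smat_0: "smat 0 A = 0" for A B :: "'a::field^'n^'m" by (simp add: smat_def vec_eq_iff)
lemma smat_zero: "smat t (0::'a::field^'n^'m) = 0" by (simp add: smat_def vec_eq_iff)
lemma smat_add: "smat s A + smat t A = smat (s+t) A" for A B :: "'a::field^'n^'m" by (simp add: smat_def vec_eq_iff algebra_simps)
lemma smat_add2: "smat s (A + B) = smat s A + smat s B" for A B :: "'a::field^'n^'m" by (simp add: smat_def vec_eq_iff algebra_simps)

lemma L2:
  fixes M :: "('a::field^2^2) set"
  assumes sub: "mat_subspace M" and noid: "\<And>X. X \<in> M \<Longrightarrow> X ** X = X \<Longrightarrow> X = 0"
  shows "mathieu_subspace M" "mat 1 \<notin> M"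
proof -
  have one: "mat 1 \<notin> M"
  proof
    assume "mat 1 \<in> M"
    then have "(mat 1 :: 'a^2^2) = 0" using noid by (simp add: matrix_mul_rid)
    then show False by (simp add: M2_one M2_zero)
  qed
  show "mat 1 \<notin> M" by (fact one)
  have add: "A + B \<in> M" if "A \<in> M" "B \<in> M" for A B using sub that by (simp add: mat_subspace_def)
  have sm: "smat t A \<in> M" if "A \<in> M" for A t using sub that by (simp add: mat_subspace_def)
  have sq: "a ** a = 0" if aM: "a \<in> M" and a2M: "a ** a \<in> M" for a
  proof -
    obtain p q r u where A: "a = M2 p q r u" by (rule M2_cases)
    show ?thesis
    proof (cases "p*u - q*r = 0")
      case True
      show ?thesis
      proof (cases "p + u = 0")
        case True2: True
        then have u: "u = - p" by (simp add: add_eq_0_iff)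
        have "q*r = - p*p" using True u by simp
        then show ?thesis unfolding A M2_zero using u by (simp add: algebra_simps mult.commute[of r q])
      next
        case False
        let ?X = "smat (1/(p+u)) a"
        have xm: "?X \<in> M" using sm aM .
        have aa: "a ** a = smat (p+u) a" using CH[of a] True unfolding A by (simp add: M2_one)
        have "?X ** ?X = smat (1/(p+u) * (1/(p+u))) (smat (p+u) a)" by (simp add: smat_mult2 aa)
        also have "\<dots> = ?X" using False by (simp add: smat_smat)
        finally have "?X ** ?X = ?X" .
        moreover have "?X \<noteq> 0"
        proof
          assume "?X = 0"
          then have "a = 0" using False by (simp add: A M2_zero)
          then show False using False A by (simp add: M2_zero)
        qed
        ultimately show ?thesis using noid xm by blast
      qed
    next
      case False
      let ?X = "smat (1/(p*u-q*r)) (smat (p+u) a + smat (-1) (a ** a))"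
      have "?X \<in> M" using sm add aM a2M by blast
      moreover have "?X = mat 1" unfolding A M2_one using False by (simp add: field_simps)
      ultimately show ?thesis using one by simp
    qed
  qed
  show "mathieu_subspace M" unfolding mathieu_subspace_def
  proof (intro conjI allI impI)
    show "mat_subspace M" by (fact sub)
    fix a b c :: "'a^2^2"
    assume pw: "\<forall>m\<ge>1. matpow a m \<in> M"
    have "a \<in> M" using pw[rule_format, of 1] by (simp add: matrix_mul_rid)
    moreover have "a ** a \<in> M" using pw[rule_format, of 2] by (simp add: numeral_2_eq_2 matrix_mul_rid)
    ultimately have a0: "a ** a = 0" using sq by blast
    have z: "0 \<in> M" using sub by (simp add: mat_subspace_def)
    have "matpow a m = 0" if "m \<ge> 2" for m
    proof -
      obtain k where "m = Suc (Suc k)" using \<open>m \<ge> 2\<close> by (metis add_2_eq_Suc le_Suc_ex)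
      then show ?thesis by (simp add: matrix_mul_assoc a0)
    qed
    then show "\<exists>N. \<forall>m\<ge>N. b ** matpow a m ** c \<in> M" using z by (intro exI[of _ 2]) simp
  qed
qed


lemma nonmax:
  fixes B D :: "'a::field^2^2"
  assumes M: "M = range (\<lambda>t. smat t B)" and DM: "D \<notin> M"
    and noid: "\<And>s t. (smat s B + smat t D) ** (smat s B + smat t D) = smat s B + smat t D \<Longrightarrow> smat s B + smat t D = 0"
  shows "\<exists>M'. mathieu_subspace M' \<and> M' \<noteq> UNIV \<and> M \<subseteq> M' \<and> M' \<noteq> M"
proof -
  define M' where "M' = {smat s B + smat t D | s t. True}"
  have sub: "mat_subspace M'" unfolding mat_subspace_def
  proof (intro conjI ballI allI)
    show "0 \<in> M'" unfolding M'_def by (rule CollectI, rule exI[of _ 0], rule exI[of _ 0]) (simp add: smat_0)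
    fix X Y assume "X \<in> M'" "Y \<in> M'"
    then obtain s t s' t' where "X = smat s B + smat t D" "Y = smat s' B + smat t' D" unfolding M'_def by blast
    then have "X + Y = smat (s+s') B + smat (t+t') D" by (simp add: smat_add[symmetric] algebra_simps)
    then show "X + Y \<in> M'" unfolding M'_def by blast
  next
    fix w X assume "X \<in> M'"
    then obtain s t where "X = smat s B + smat t D" unfolding M'_def by blast
    then have "smat w X = smat (w * s) B + smat (w * t) D" by (simp add: smat_add2 smat_smat)
    then show "smat w X \<in> M'" unfolding M'_def by blast
  qed
  have ni: "X = 0" if "X \<in> M'" "X ** X = X" for X
    using that noid unfolding M'_def by blast
  have "mathieu_subspace M'" "mat 1 \<notin> M'" using L2[OF sub ni] by blast+
  moreover have "M \<subseteq> M'"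
  proof
    fix X assume "X \<in> M"
    then obtain t where "X = smat t B" unfolding M by blast
    then have "X = smat t B + smat 0 D" by (simp add: smat_0)
    then show "X \<in> M'" unfolding M'_def by blast
  qed
  moreover have "D \<in> M'"
  proof -
    have "D = smat 0 B + smat 1 D" by (simp add: smat_0 smat_1)
    then show ?thesis unfolding M'_def by blast
  qed
  ultimately show ?thesis using DM by blast
qed

lemma quad_root:
  fixes A L C :: "'a::alg_closed_field"
  assumes "A \<noteq> 0 \<or> L \<noteq> 0"
  shows "\<exists>t. A*t*t + L*t + C = 0"
proof (cases "A = 0")
  case True
  then have "L \<noteq> 0" using assms by simp
  then show ?thesis using True by (intro exI[of _ "- C / L"]) (simp add: field_simps)
next
  case False
  define f where "f = (\<lambda>k::nat. if k = 0 then C else if k = 1 then L else A)"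
  have "\<exists>x. (\<Sum>k\<le>2. f k * x ^ k) = 0" using False by (intro alg_closed) (auto simp: f_def)
  then obtain x where "(\<Sum>k\<le>2. f k * x ^ k) = 0" by blast
  then have "A*x*x + L*x + C = 0" by (simp add: f_def numeral_2_eq_2 power2_eq_square algebra_simps)
  then show ?thesis by blast
qed

lemma key:
  fixes B :: "'a::alg_closed_field^2^2"
  assumes Bnz: "B \<noteq> 0" and M: "M = range (\<lambda>t. smat t B)" and max: "maximal_mathieu_subspace M"
  shows "\<exists>s c. s \<noteq> 0 \<and> c \<noteq> 0 \<and> c ** c = 0 \<and> tr2 c = 0 \<and> B = smat s (mat 1 + c) \<and> tr2 B \<noteq> 0"
proof -
  have ms: "mathieu_subspace M" and nU: "M \<noteq> UNIV"
    and mx: "\<And>M'. mathieu_subspace M' \<Longrightarrow> M' \<noteq> UNIV \<Longrightarrow> M \<subseteq> M' \<Longrightarrow> M' = M"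
    using max unfolding maximal_mathieu_subspace_def by blast+
  have noidB: "smat t B = 0" if "smat t B ** smat t B = smat t B" for t
  proof (rule ccontr)
    assume "smat t B \<noteq> 0"
    moreover have "smat t B \<in> M" unfolding M by blast
    ultimately have "M = UNIV" using L1[OF ms _ that] by blast
    then show False using nU by simp
  qed
  have nm: "\<exists>s t. (smat s B + smat t D) ** (smat s B + smat t D) = smat s B + smat t D \<and> smat s B + smat t D \<noteq> 0"
    if "D \<notin> M" for D
  proof (rule ccontr)
    assume "\<not> ?thesis"
    then have "\<exists>M'. mathieu_subspace M' \<and> M' \<noteq> UNIV \<and> M \<subseteq> M' \<and> M' \<noteq> M"
      using nonmax[OF M that] by blast
    then show False using mx by blast
  qed
  obtain p q r u where BB: "B = M2 p q r u" by (rule M2_cases)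
  have nzB: "\<not> (p = 0 \<and> q = 0 \<and> r = 0 \<and> u = 0)" using Bnz unfolding BB M2_zero by auto
  have inM: "\<exists>t. M2 a b c d = smat t B" if "M2 a b c d \<in> M" for a b c d
    using that unfolding M by auto
  show ?thesis
  proof (cases "p + u = 0")
    case True
    then have u: "u = - p" by (simp add: add_eq_0_iff)
    have "False"
    proof (cases "q \<noteq> 0")
      case True
      have DM: "M2 0 0 1 0 \<notin> M"
      proof
        assume "M2 0 0 1 0 \<in> M"
        then obtain t where "M2 0 0 1 0 = smat t B" using inM by blast
        then have "0 = t * q" "1 = t * r" unfolding BB by simp_all
        then show False using True by simp
      qed
      obtain s t where X: "(smat s B + smat t (M2 0 0 1 0)) ** (smat s B + smat t (M2 0 0 1 0)) = smat s B + smat t (M2 0 0 1 0)"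
        "smat s B + smat t (M2 0 0 1 0) \<noteq> 0" using nm[OF DM] by blast
      from idem_char[OF X] show False unfolding BB M2_one using True u by auto
    next
      case q0: False
      show False
      proof (cases "r = 0 \<and> u = p")
        case True
        then have p0: "p \<noteq> 0" using nzB q0 by auto
        have "smat (1/p) B = mat 1" unfolding BB M2_one using True q0 p0 by simp
        then have "smat (1/p) B = 0" using noidB[of "1/p"] by (simp add: matrix_mul_rid)
        then show False using p0 unfolding BB M2_zero by simp
      next
        case rr: False
        have DM: "M2 0 1 0 0 \<notin> M"
        proof
          assume "M2 0 1 0 0 \<in> M"
          then obtain t where "M2 0 1 0 0 = smat t B" using inM by blast
          then have "1 = t * q" "0 = t * r" "0 = t * p" "0 = t * u" unfolding BB by simp_all
          then show False using q0 by simp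
        qed
        obtain s t where X: "(smat s B + smat t (M2 0 1 0 0)) ** (smat s B + smat t (M2 0 1 0 0)) = smat s B + smat t (M2 0 1 0 0)"
          "smat s B + smat t (M2 0 1 0 0) \<noteq> 0" using nm[OF DM] by blast
        from idem_char[OF X] show False unfolding BB M2_one using rr q0 u by auto
      qed
    qed
    then show ?thesis ..
  next
    case False
    have dnz: "p*u - q*r \<noteq> 0"
    proof
      assume d0: "p*u - q*r = 0"
      let ?X = "smat (1/(p+u)) B"
      have bb: "B ** B = smat (p+u) B" using CH[of B] d0 unfolding BB by (simp add: M2_one)
      have "?X ** ?X = smat (1/(p+u) * (1/(p+u))) (smat (p+u) B)" by (simp add: smat_mult2 bb)
      also have "\<dots> = ?X" using False by (simp add: smat_smat)
      finally have "?X = 0" using noidB by blast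
      then have "B = 0" using False unfolding BB M2_zero by simp
      then show False using Bnz by simp
    qed
    obtain x y z where c1: "x*x + y*z = 0" and c2: "(u-p)*x - r*y - q*z = 0" and nzx: "\<not>(x=0 \<and> y=0 \<and> z=0)"
    proof -
      consider "r = 0" | "r \<noteq> 0" "q = 0" | "r \<noteq> 0" "q \<noteq> 0" by blast
      then show ?thesis
      proof cases
        case 1 then show ?thesis using that[of 0 1 0] by simp
      next
        case 2 then show ?thesis using that[of 0 0 1] by simp
      next
        case 3
        then obtain x where "q*x*x + (u-p)*x + (-r) = 0" using quad_root[of q "u-p" "-r"] by blast
        then have "(u-p)*x - r*1 - q*(-(x*x)) = 0" by algebra
        then show ?thesis using that[of x 1 "-(x*x)"] by simp
      qed
    qed
    define D where "D = M2 x y z (-x)"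
    have DM: "D \<notin> M"
    proof
      assume "D \<in> M"
      then obtain t where "D = smat t B" unfolding M by blast
      then have eq: "M2 x y z (-x) = M2 (t*p) (t*q) (t*r) (t*u)" unfolding BB D_def by (simp only: M2_smat)
      have e: "x = t*p" "y = t*q" "z = t*r" "-x = t*u" using eq unfolding M2_eq by blast+
      then have "x*(-x) - y*z = t*t*(p*u - q*r)" by algebra
      then have "t*t*(p*u - q*r) = 0" using c1 by algebra
      then have "t = 0" using dnz by simp
      then show False using e nzx by simp
    qed
    obtain s t where X: "(smat s B + smat t D) ** (smat s B + smat t D) = smat s B + smat t D"
      "smat s B + smat t D \<noteq> 0" using nm[OF DM] by blast
    have XX: "smat s B + smat t D = M2 (s*p + t*x) (s*q + t*y) (s*r + t*z) (s*u + t*(-x))"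
      unfolding BB D_def by simp
    have tr: "tr2 (smat s B + smat t D) = s * (p+u)" unfolding XX tr2_M2 by algebra
    have dt: "dt2 (smat s B + smat t D) = s * s * (p*u - q*r)" unfolding XX dt2_M2 using c1 c2 by algebra
    have "smat s B + smat t D = mat 1"
    proof (rule ccontr)
      assume "smat s B + smat t D \<noteq> mat 1"
      then have "s * (p+u) = 1" "s * s * (p*u - q*r) = 0" using idem_char[OF X] tr dt by auto
      then show False using dnz by auto
    qed
    then have E: "s*p + t*x = 1" "s*q + t*y = 0" "s*r + t*z = 0" "s*u - t*x = 1"
      unfolding XX M2_one by simp_all
    have s0: "s \<noteq> 0"
    proof
      assume "s = 0"
      then have "t*x = 1" "t*y = 0" "t*z = 0" using E by simp_all
      then have "t \<noteq> 0" "y = 0" "z = 0" by auto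
      then have "x*x = 0" using c1 by simp
      then show False using \<open>t*x = 1\<close> by simp
    qed
    define c where "c = M2 (-(t*x)) (-(t*y)) (-(t*z)) (t*x)"
    have Bc: "B = smat (1/s) (mat 1 + c)"
      unfolding BB c_def M2_one using E s0 by (simp add: field_simps) (intro conjI; algebra)
    have cc: "c ** c = 0"
    proof -
      have "t*x*(t*x) + t*y*(t*z) = 0" "t*z*(t*y) + t*x*(t*x) = 0" using c1 by algebra+
      then show ?thesis unfolding c_def M2_zero by (simp add: algebra_simps)
    qed
    have trc: "tr2 c = 0" unfolding c_def by simp
    have cnz: "c \<noteq> 0"
    proof
      assume "c = 0"
      then have "smat s B = mat 1" using Bc s0 by (simp add: smat_smat smat_add2 smat_zero smat_1)
      then have "smat s B = 0" using noidB[of s] by (simp add: matrix_mul_rid)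
      then have "(mat 1::'a^2^2) = 0" using \<open>smat s B = mat 1\<close> by simp
      then show False by (simp add: M2_one M2_zero)
    qed
    have "1/s \<noteq> 0" using s0 by simp
    moreover have "tr2 B \<noteq> 0" using False unfolding BB by simp
    ultimately show ?thesis using cnz cc trc Bc by blast
  qed
qed

lemma nil2:
  fixes a b e d :: "'a::field"
  assumes "M2 a b e d ** M2 a b e d = 0"
  shows "d = - a" "a*a + b*e = 0"
proof -
  have h: "a*a+b*e = 0" "a*b+b*d = 0" "e*a+d*e = 0" "e*b+d*d = 0"
    using assms unfolding M2_zero by simp_all
  have ad: "a + d = 0"
  proof (rule ccontr)
    assume n: "a + d \<noteq> 0"
    have "b*(a+d) = 0" "e*(a+d) = 0" using h by algebra+
    then have "b = 0" "e = 0" using n by auto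
    then have "a*a = 0" "d*d = 0" using h by simp_all
    then show False using n by simp
  qed
  then show "d = - a" by (simp add: add_eq_0_iff)
  show "a*a + b*e = 0" by (fact h(1))
qed

lemma proport:
  fixes a b e x y z :: "'a::field"
  assumes h1: "a*a + b*e = 0" and h2: "x*x + y*z = 0" and h3: "2*a*x + b*z + e*y = 0"
    and nz: "\<not> (a = 0 \<and> b = 0 \<and> e = 0)"
  shows "\<exists>l. x = l*a \<and> y = l*b \<and> z = l*e"
proof -
  have "(a*y - b*x)*(a*y - b*x) = 0" using h1 h2 h3 by algebra
  then have c1: "a*y = b*x" by simp
  have "(a*z - e*x)*(a*z - e*x) = 0" using h1 h2 h3 by algebra
  then have c2: "a*z = e*x" by simp
  have "(b*z - e*y)*(b*z - e*y) = 0" using h1 h2 h3 by algebra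
  then have c3: "b*z = e*y" by simp
  show ?thesis
  proof (cases "a = 0")
    case False
    then show ?thesis using c1 c2 by (intro exI[of _ "x/a"]) (simp add: field_simps)
  next
    case a0: True
    show ?thesis
    proof (cases "b = 0")
      case False
      then show ?thesis using c1 c3 a0 by (intro exI[of _ "y/b"]) (simp add: field_simps)
    next
      case True
      then have "e \<noteq> 0" using nz a0 by simp
      then show ?thesis using c2 c3 a0 True by (intro exI[of _ "z/e"]) (simp add: field_simps)
    qed
  qed
qed

lemma maxprove:
  fixes c :: "'a::alg_closed_field^2^2"
  assumes two: "(2::'a) \<noteq> 0" and cnz: "c \<noteq> 0" and cc: "c ** c = 0"
    and M: "M = range (\<lambda>t. smat t (mat 1 + c))"
  shows "maximal_mathieu_subspace M"
proof -
  obtain a b e d where C0: "c = M2 a b e d" by (rule M2_cases)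
  have d: "d = - a" and h: "a*a + b*e = 0" using nil2[of a b e d] cc unfolding C0 by auto
  have C: "c = M2 a b e (-a)" using C0 d by simp
  have nz: "\<not> (a = 0 \<and> b = 0 \<and> e = 0)" using cnz unfolding C M2_zero by auto
  define B where "B = mat 1 + c"
  have BB: "B = M2 (1+a) b e (1-a)" unfolding B_def C M2_one by simp
  have sub: "mat_subspace M" unfolding mat_subspace_def M
  proof (intro conjI ballI allI)
    show "0 \<in> range (\<lambda>t. smat t (mat 1 + c))" by (rule range_eqI[of _ _ 0]) (simp add: smat_0)
  next
    fix X Y assume "X \<in> range (\<lambda>t. smat t (mat 1 + c))" "Y \<in> range (\<lambda>t. smat t (mat 1 + c))"
    then obtain s t where "X = smat s (mat 1 + c)" "Y = smat t (mat 1 + c)" by blast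
    then have "X + Y = smat (s+t) (mat 1 + c)" by (simp add: smat_add)
    then show "X + Y \<in> range (\<lambda>t. smat t (mat 1 + c))" by blast
  next
    fix w X assume "X \<in> range (\<lambda>t. smat t (mat 1 + c))"
    then obtain t where "X = smat t (mat 1 + c)" by blast
    then have "smat w X = smat (w * t) (mat 1 + c)" by (simp add: smat_smat)
    then show "smat w X \<in> range (\<lambda>t. smat t (mat 1 + c))" by blast
  qed
  have noid: "X = 0" if XM: "X \<in> M" and XXX: "X ** X = X" for X
  proof -
    obtain t where X: "X = smat t B" using XM unfolding M B_def by blast
    have eqs: "t*(1+a)*(t*(1+a)) + t*b*(t*e) = t*(1+a)" "t*(1+a)*(t*b) + t*b*(t*(1-a)) = t*b"
      "t*e*(t*(1+a)) + t*(1-a)*(t*e) = t*e" "t*e*(t*b) + t*(1-a)*(t*(1-a)) = t*(1-a)"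
      using XXX unfolding X BB by simp_all
    have "2*(t*t - t) = 0" using eqs h by algebra
    then have tt: "t*t = t" using two by simp
    have "2*((2*t*t - t)*a) = 0" using eqs h by algebra
    then have "(2*t*t - t)*a = 0" using two by simp
    moreover have "(2*t*t - t)*b = 0" "(2*t*t - t)*e = 0" using eqs by algebra+
    ultimately have "2*t*t - t = 0" using nz by auto
    then have "t = 0" using tt by algebra
    then show ?thesis unfolding X by (simp add: smat_0)
  qed
  have ms: "mathieu_subspace M" and one: "mat 1 \<notin> M" using L2[OF sub noid] by blast+
  have nU: "M \<noteq> UNIV" using one by blast
  have BM: "B \<in> M" unfolding M B_def by (rule range_eqI[of _ _ 1]) (simp add: smat_1)
  have "M' = M" if ms': "mathieu_subspace M'" and nU': "M' \<noteq> UNIV" and MM': "M \<subseteq> M'" for M'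
  proof (rule ccontr)
    assume "M' \<noteq> M"
    then obtain D where DM': "D \<in> M'" and DM: "D \<notin> M" using MM' by blast
    have sub': "mat_subspace M'" using ms' by (simp add: mathieu_subspace_def)
    have lin: "smat s B + smat t D \<in> M'" for s t
      using sub' BM MM' DM' unfolding mat_subspace_def by blast
    have "\<exists>s t. (smat s B + smat t D) ** (smat s B + smat t D) = smat s B + smat t D \<and> smat s B + smat t D \<noteq> 0"
    proof -
      obtain d1 d2 d3 d4 where DD: "D = M2 d1 d2 d3 d4" by (rule M2_cases)
      show ?thesis
      proof (cases "\<exists>al be. D = smat al (mat 1) + smat be c")
        case True
        then obtain al be where De: "D = smat al (mat 1) + smat be c" by blast
        have ne: "al \<noteq> be"
        proof
          assume "al = be"
          then have "D = smat al B" unfolding De B_def by (simp add: smat_add2)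
          then show False using DM unfolding M B_def by blast
        qed
        then have ne': "al - be \<noteq> 0" by simp
        define w where "w = 1 / (al - be)"
        have w: "w * (al - be) = 1" unfolding w_def using ne' by simp
        have "smat (- be * w) B + smat w D = mat 1"
          unfolding De BB C M2_one M2_smat M2_add M2_eq
          apply (intro conjI) using w by algebra+
        then show ?thesis by (metis matrix_mul_rid M2_one M2_zero M2_eq zero_neq_one)
      next
        case False
        define k :: 'a where "k = 1/2"
        have k2: "2*k = 1" using two unfolding k_def by simp
        define hh :: 'a where "hh = k*(d1+d4)"
        define x y z where "x = d1 - hh*(1+a)" and "y = d2 - hh*b" and "z = d3 - hh*e"
        have d4: "d4 = -x + hh*(1-a)" unfolding x_def hh_def using k2 by algebra
        show ?thesis
        proof (cases "x*x + y*z = 0 \<and> 2*a*x + b*z + e*y = 0")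
          case True
          then obtain l where l: "x = l*a" "y = l*b" "z = l*e" using proport[OF h _ _ nz] by blast
          have "D = smat hh (mat 1) + smat (hh + l) c"
            unfolding DD C M2_one M2_smat M2_add M2_eq
            apply (intro conjI) using l d4 unfolding x_def y_def z_def by algebra+
          then show ?thesis using False by blast
        next
          case nPQ: False
          obtain t where t: "(-(x*x + y*z))*t*t + (-(k*(2*a*x + b*z + e*y)))*t + k*k = 0"
          proof -
            have "k \<noteq> 0" using k2 by auto
            then have "x*x + y*z \<noteq> 0 \<or> k*(2*a*x + b*z + e*y) \<noteq> 0" using nPQ by auto
            then have "-(x*x + y*z) \<noteq> 0 \<or> -(k*(2*a*x + b*z + e*y)) \<noteq> 0" by (simp only: neg_equal_0_iff_equal)
            from quad_root[OF this, of "k*k"] show ?thesis using that by blast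
          qed
          let ?X = "smat (k - t*hh) B + smat t D"
          have XX: "?X = M2 ((k - t*hh)*(1+a) + t*d1) ((k - t*hh)*b + t*d2) ((k - t*hh)*e + t*d3) ((k - t*hh)*(1-a) + t*d4)"
            unfolding BB DD by simp
          have "tr2 ?X = 1" unfolding XX unfolding tr2_M2 hh_def using k2 by algebra
          moreover have "dt2 ?X = 0" unfolding XX unfolding dt2_M2 d4 using t h k2 unfolding x_def y_def z_def by algebra
          ultimately show ?thesis using idem_of_char by blast
        qed
      qed
    qed
    then obtain s t where "(smat s B + smat t D) ** (smat s B + smat t D) = smat s B + smat t D" "smat s B + smat t D \<noteq> 0"
      by blast
    then have "M' = UNIV" using L1[OF ms' lin] by blast
    then show False using nU' by simp
  qed
  then show ?thesis unfolding maximal_mathieu_subspace_def using ms nU by blast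
qed

lemma dt2_mult: "dt2 (A ** B) = dt2 A * dt2 B" for A B :: "'a::field^2^2"
proof -
  obtain a b c d where A: "A = M2 a b c d" by (rule M2_cases)
  obtain a' b' c' d' where B: "B = M2 a' b' c' d'" by (rule M2_cases)
  show ?thesis unfolding A B M2_mult dt2_M2 by algebra
qed

lemma dt2_matpow: "dt2 (matpow A k) = dt2 A ^ k" for A :: "'a::field^2^2"
  by (induction k) (simp_all add: dt2_mult M2_one)

lemma mul_smat: "A ** smat s X = smat s (A ** X)" for A X :: "'a::field^2^2"
  using smat_mult2[of 1 A s X] by (simp add: smat_1)

lemma nilp_sq:
  fixes c :: "'a::field^2^2"
  assumes "mat_nilpotent c"
  shows "c ** c = 0"
proof -
  obtain k where k: "matpow c k = 0" using assms unfolding mat_nilpotent_def by blast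
  have k0: "k \<noteq> 0"
  proof
    assume "k = 0"
    then have "(mat 1::'a^2^2) = 0" using k by simp
    then show False by (simp add: M2_one M2_zero)
  qed
  have "dt2 c ^ k = 0" using k dt2_matpow[of c k] by (simp add: M2_zero)
  then have d0: "dt2 c = 0" by simp
  then have cc: "c ** c = smat (tr2 c) c" using CH[of c] by (simp add: smat_0)
  have pw: "matpow c (Suc m) = smat (tr2 c ^ m) c" for m
  proof (induction m)
    case 0 then show ?case by (simp add: matrix_mul_rid smat_1)
  next
    case (Suc m)
    have "matpow c (Suc (Suc m)) = c ** smat (tr2 c ^ m) c" using Suc by simp
    also have "\<dots> = smat (tr2 c ^ Suc m) c" by (simp add: mul_smat cc smat_smat mult.commute)
    finally show ?case .
  qed
  obtain m where "k = Suc m" using k0 not0_implies_Suc by blast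
  then have z: "smat (tr2 c ^ m) c = 0" using k pw by simp
  show ?thesis
  proof (cases "c = 0")
    case True then show ?thesis by simp
  next
    case False
    obtain a b e d where C: "c = M2 a b e d" by (rule M2_cases)
    have "tr2 c ^ m = 0" using z False unfolding C M2_zero by auto
    then have "tr2 c = 0" by simp
    then show ?thesis using cc by (simp add: smat_0)
  qed
qed

lemma two_ne0: "CHAR('a::field) \<noteq> 2 \<Longrightarrow> (2::'a) \<noteq> 0"
proof
  assume n: "CHAR('a) \<noteq> 2" and t: "(2::'a) = 0"
  have "of_nat 2 = (0::'a)" using t by simp
  then have "CHAR('a) dvd 2" by (simp only: of_nat_eq_0_iff_char_dvd)
  moreover have "CHAR('a) \<noteq> Suc 0" by simp
  moreover have "CHAR('a) \<le> 2" using \<open>CHAR('a) dvd 2\<close> by (rule dvd_imp_le) simp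
  moreover have "CHAR('a) \<noteq> 0"
  proof
    assume "CHAR('a) = 0"
    then show False using \<open>CHAR('a) dvd 2\<close> by simp
  qed
  ultimately show False using n by linarith
qed

lemma two_eq0: "CHAR('a::field) = 2 \<Longrightarrow> (2::'a) = 0"
proof -
  assume "CHAR('a) = 2"
  then have "of_nat 2 = (0::'a)" by (simp only: of_nat_eq_0_iff_char_dvd dvd_refl)
  then show ?thesis by simp
qed

theorem corollary3p4:
  fixes F_witness :: "'a::alg_closed_field itself"
  shows "(CHAR('a) \<noteq> 2 \<longrightarrow>
           (\<forall>M :: ('a^2^2) set. (one_dim_subspace M \<and> maximal_mathieu_subspace M) \<longleftrightarrow>
              (\<exists>c. c \<noteq> 0 \<and> mat_nilpotent c \<and> M = range (\<lambda>t. smat t (mat 1 + c)))))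
       \<and> (CHAR('a) = 2 \<longrightarrow>
           \<not> (\<exists>M :: ('a^2^2) set. one_dim_subspace M \<and> maximal_mathieu_subspace M))"
proof (intro conjI impI allI)
  assume ch: "CHAR('a) \<noteq> 2"
  have two: "(2::'a) \<noteq> 0" using two_ne0[OF ch] .
  fix M :: "('a^2^2) set"
  show "(one_dim_subspace M \<and> maximal_mathieu_subspace M) \<longleftrightarrow>
              (\<exists>c. c \<noteq> 0 \<and> mat_nilpotent c \<and> M = range (\<lambda>t. smat t (mat 1 + c)))"
  proof
    assume a: "one_dim_subspace M \<and> maximal_mathieu_subspace M"
    then obtain B where Bnz: "B \<noteq> 0" and M: "M = range (\<lambda>t. smat t B)"
      unfolding one_dim_subspace_def by blast
    obtain s c where s: "s \<noteq> 0" and cnz: "c \<noteq> 0" and cc: "c ** c = 0" and Bc: "B = smat s (mat 1 + c)"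
      using key[OF Bnz M] a by blast
    have "mat_nilpotent c" unfolding mat_nilpotent_def
      by (rule exI[of _ 2]) (simp add: numeral_2_eq_2 matrix_mul_rid cc)
    moreover have "M = range (\<lambda>t. smat t (mat 1 + c))"
    proof
      show "M \<subseteq> range (\<lambda>t. smat t (mat 1 + c))"
        unfolding M Bc by (auto simp: smat_smat)
      show "range (\<lambda>t. smat t (mat 1 + c)) \<subseteq> M"
      proof
        fix X assume "X \<in> range (\<lambda>t. smat t (mat 1 + c))"
        then obtain t where X: "X = smat t (mat 1 + c)" by blast
        have "X = smat (t / s) B" unfolding X Bc using s by (simp add: smat_smat)
        then show "X \<in> M" unfolding M by blast
      qed
    qed
    ultimately show "\<exists>c. c \<noteq> 0 \<and> mat_nilpotent c \<and> M = range (\<lambda>t. smat t (mat 1 + c))"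
      using cnz by blast
  next
    assume "\<exists>c. c \<noteq> 0 \<and> mat_nilpotent c \<and> M = range (\<lambda>t. smat t (mat 1 + c))"
    then obtain c where cnz: "c \<noteq> 0" and nil: "mat_nilpotent c" and M: "M = range (\<lambda>t. smat t (mat 1 + c))"
      by blast
    have cc: "c ** c = 0" using nilp_sq[OF nil] .
    have "mat 1 + c \<noteq> 0"
    proof
      assume "mat 1 + c = 0"
      obtain a b e d where C: "c = M2 a b e d" by (rule M2_cases)
      have "M2 (1+a) b e (1+d) = M2 0 0 0 0" using \<open>mat 1 + c = 0\<close> unfolding C M2_one M2_zero by simp
      then have "a = -1" "b = 0" "e = 0" "d = -1" unfolding M2_eq by (simp_all add: add_eq_0_iff)
      then show False using cc unfolding C M2_zero by simp
    qed
    then have "one_dim_subspace M" unfolding one_dim_subspace_def M by blast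
    moreover have "maximal_mathieu_subspace M" using maxprove[OF two cnz cc M] .
    ultimately show "one_dim_subspace M \<and> maximal_mathieu_subspace M" by blast
  qed
next
  assume ch: "CHAR('a) = 2"
  have two: "(2::'a) = 0" using two_eq0[OF ch] .
  show "\<not> (\<exists>M :: ('a^2^2) set. one_dim_subspace M \<and> maximal_mathieu_subspace M)"
  proof
    assume "\<exists>M :: ('a^2^2) set. one_dim_subspace M \<and> maximal_mathieu_subspace M"
    then obtain M :: "('a^2^2) set" and B where Bnz: "B \<noteq> 0" and M: "M = range (\<lambda>t. smat t B)"
      and mx: "maximal_mathieu_subspace M" unfolding one_dim_subspace_def by blast
    obtain s c where trc: "tr2 c = 0" and Bc: "B = smat s (mat 1 + c)" and trB: "tr2 B \<noteq> 0"
      using key[OF Bnz M mx] by blast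
    obtain a b e d where C: "c = M2 a b e d" by (rule M2_cases)
    have "tr2 B = s * (2 + tr2 c)" unfolding Bc C M2_one by (simp add: algebra_simps)
    then have "tr2 B = 0" using trc two by simp
    then show False using trB by simp
  qed
qed

end
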